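(* For $a>0$ and $m>0$, $$\int_{0}^{1}\frac{\tanh^{-1}(x^m)}{x\left(a^2+\log^2 x\right)}\,dx=\frac{\pi}{4a}\log\!\left(\frac{am\,\Gamma\!\left(\frac{am}{2\pi}\right)^2}{2\pi\,\Gamma\!\left(\frac{am+\pi}{2\pi}\right)^2}\right).$$ *)

theory Defs
  imports "HOL-Analysis.Analysis"
begin

end

theory Submission
  imports Defs "HOL-Real_Asymp.Real_Asymp"
begin

lemma LB:
  fixes f F :: "real \<Rightarrow> real" and a b :: ereal
  assumes "a < b"
  assumes F: "\<And>x. a < ereal x \<Longrightarrow> ereal x < b \<Longrightarrow> DERIV F x :> f x"
  assumes f: "\<And>x. a < ereal x \<Longrightarrow> ereal x < b \<Longrightarrow> isCont f x"
  assumes f_nonneg: "\<And>x. a < ereal x \<Longrightarrow> ereal x < b \<Longrightarrow> 0 \<le> f x"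
  assumes A: "((F \<circ> real_of_ereal) \<longlongrightarrow> A) (at_right a)"
  assumes B: "((F \<circ> real_of_ereal) \<longlongrightarrow> B) (at_left b)"
  shows "(\<integral>\<^sup>+x. ennreal (indicator (einterval a b) x * f x) \<partial>lborel) = ennreal (B - A)"
proof -
  have nn: "AE x in lborel. a < ereal x \<longrightarrow> ereal x < b \<longrightarrow> 0 \<le> f x" using f_nonneg by auto
  note R = interval_integral_FTC_nonneg[OF assms(1) F f nn A B]
  have int: "integrable lborel (\<lambda>x. indicator (einterval a b) x * f x)"
    using R(1) unfolding set_integrable_def by simp
  have "(\<integral>\<^sup>+x. ennreal (indicator (einterval a b) x * f x) \<partial>lborel)
        = ennreal (\<integral>x. indicator (einterval a b) x * f x \<partial>lborel)"
    by (rule nn_integral_eq_integral[OF int]) (auto simp: indicator_def einterval_def f_nonneg)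
  also have "(\<integral>x. indicator (einterval a b) x * f x \<partial>lborel) = (LBINT x=a..b. f x)"
    using assms(1) by (simp add: interval_lebesgue_integral_def set_lebesgue_integral_def)
  finally show ?thesis using R(2) by simp
qed

lemma artanh_sums:
  fixes y :: real assumes "0 \<le> y" "y < 1"
  shows "(\<lambda>n. y ^ (2*n+1) / real (2*n+1)) sums artanh y"
proof -
  define x where "x = (1 + y) / (1 - y)"
  have x: "x > 0" using assms by (simp add: x_def)
  have "(x - 1) / (x + 1) = y" using assms by (simp add: x_def field_simps)
  with ln_series_quadratic[OF x] have "(\<lambda>n. 2 * y ^ (2*n+1) / real (2*n+1)) sums ln x" by simp
  from sums_divide[OF this, of 2] have "(\<lambda>n. 2 * y ^ (2*n+1) / real (2*n+1) / 2) sums (ln x / 2)" .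
  also have "(\<lambda>n. 2 * y ^ (2*n+1) / real (2*n+1) / 2) = (\<lambda>n. y ^ (2*n+1) / real (2*n+1))" by (rule ext) (simp add: field_simps)
  finally show ?thesis by (simp add: artanh_def x_def)
qed

lemma exp_subst_nonneg:
  fixes f :: "real \<Rightarrow> real"
  assumes fm[measurable]: "f \<in> borel_measurable borel" and nn: "\<And>x. 0 \<le> f x"
  shows "(\<integral>\<^sup>+x. ennreal (indicator {0<..<1} x * f x) \<partial>lborel) =
         (\<integral>\<^sup>+t. ennreal (indicator {0<..} t * (f (exp (-t)) * exp (-t))) \<partial>lborel)"
proof -
  define L where "L = (\<lambda>n::nat. \<lambda>x. ennreal (f x * indicator {exp (- real n)..1} x))"
  define R where "R = (\<lambda>n::nat. \<lambda>t. ennreal (f (exp (-t)) * exp (-t) * indicator {0..real n} t))"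
  have eq: "integral\<^sup>N lborel (L n) = integral\<^sup>N lborel (R n)" for n
  proof -
    have "integral\<^sup>N lborel (L n) = (\<integral>\<^sup>+ x. ennreal (f (exp x) * exp x * indicator {- real n..0} x) \<partial>lborel)"
      unfolding L_def
      by (rule nn_integral_substitution[of exp "- real n" 0 f exp, simplified])
         (auto simp: set_borel_measurable_def intro!: DERIV_exp continuous_intros)
    also have "\<dots> = ennreal \<bar>-1\<bar> * (\<integral>\<^sup>+ x. ennreal (f (exp (0 + (-1) * x)) * exp (0 + (-1) * x) * indicator {- real n..0} (0 + (-1) * x)) \<partial>lborel)"
      by (rule nn_integral_real_affine) auto
    also have "\<dots> = integral\<^sup>N lborel (R n)"
      unfolding R_def by (simp add: indicator_def conj_commute)
    finally show ?thesis .
  qed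
  have L_lim: "(\<lambda>n. integral\<^sup>N lborel (L n)) \<longlonglongrightarrow> (\<integral>\<^sup>+x. ennreal (f x * indicator {0<..1} x) \<partial>lborel)"
  proof (rule nn_integral_LIMSEQ)
    show "incseq L" unfolding L_def
      by (intro incseq_SucI le_funI ennreal_leI mult_left_mono) 
         (auto simp: indicator_def nn intro: order_trans[rotated])
    show "L i \<in> borel_measurable lborel" for i unfolding L_def by measurable
    fix x :: real
    show "(\<lambda>i. L i x) \<longlonglongrightarrow> ennreal (f x * indicator {0<..1} x)"
    proof (cases "x > 0")
      case True
      have "\<forall>\<^sub>F n in sequentially. L n x = ennreal (f x * indicator {0<..1} x)"
        using eventually_ge_at_top[of "nat \<lceil>- ln x\<rceil>"]
      proof eventually_elim
        case (elim n)
        hence "real n \<ge> - ln x" by linarith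
        hence "exp (- real n) \<le> exp (ln x)" by simp
        with True have "exp (- real n) \<le> x" by simp
        thus ?case using True by (auto simp: L_def indicator_def)
      qed
      thus ?thesis by (rule tendsto_eventually)
    next
      case False
      have "L n x = ennreal (f x * indicator {0<..1} x)" for n
      proof -
        have "\<not> exp (- real n) \<le> x" using False exp_gt_zero[of "- real n"] by linarith
        thus ?thesis using False by (auto simp: L_def indicator_def)
      qed
      thus ?thesis by simp
    qed
  qed
  have R_lim: "(\<lambda>n. integral\<^sup>N lborel (R n)) \<longlonglongrightarrow> (\<integral>\<^sup>+t. ennreal (f (exp (-t)) * exp (-t) * indicator {0..} t) \<partial>lborel)"
  proof (rule nn_integral_LIMSEQ)
    show "incseq R" unfolding R_def
      by (intro incseq_SucI le_funI ennreal_leI mult_left_mono) 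
         (auto simp: indicator_def nn)
    show "R i \<in> borel_measurable lborel" for i unfolding R_def by measurable
    fix t :: real
    have "\<forall>\<^sub>F n in sequentially. R n t = ennreal (f (exp (-t)) * exp (-t) * indicator {0..} t)"
      using eventually_ge_at_top[of "nat \<lceil>t\<rceil>"]
    proof eventually_elim
      case (elim n)
      hence "real n \<ge> t" by linarith
      thus ?case by (auto simp: R_def indicator_def)
    qed
    thus "(\<lambda>i. R i t) \<longlonglongrightarrow> ennreal (f (exp (-t)) * exp (-t) * indicator {0..} t)"
      by (rule tendsto_eventually)
  qed
  have "(\<integral>\<^sup>+x. ennreal (f x * indicator {0<..1} x) \<partial>lborel) = (\<integral>\<^sup>+t. ennreal (f (exp (-t)) * exp (-t) * indicator {0..} t) \<partial>lborel)"
    using LIMSEQ_unique[OF L_lim] R_lim eq by simp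
  moreover have "(\<integral>\<^sup>+x. ennreal (f x * indicator {0<..1} x) \<partial>lborel) = (\<integral>\<^sup>+x. ennreal (indicator {0<..<1} x * f x) \<partial>lborel)"
    by (intro nn_integral_cong_AE eventually_mono[OF AE_lborel_singleton[of 1]]) (auto simp: indicator_def)
  moreover have "(\<integral>\<^sup>+t. ennreal (f (exp (-t)) * exp (-t) * indicator {0..} t) \<partial>lborel) = (\<integral>\<^sup>+t. ennreal (indicator {0<..} t * (f (exp (-t)) * exp (-t))) \<partial>lborel)"
    by (intro nn_integral_cong_AE eventually_mono[OF AE_lborel_singleton[of 0]]) (auto simp: indicator_def)
  ultimately show ?thesis by simp
qed

lemma LB_Ioi:
  fixes f F :: "real \<Rightarrow> real"
  assumes F: "\<And>x. v < x \<Longrightarrow> DERIV F x :> f x"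
  assumes f: "\<And>x. v < x \<Longrightarrow> isCont f x"
  assumes f_nonneg: "\<And>x. v < x \<Longrightarrow> 0 \<le> f x"
  assumes A: "(F \<longlongrightarrow> A) (at_right v)"
  assumes B: "(F \<longlongrightarrow> B) at_top"
  shows "(\<integral>\<^sup>+x. ennreal (indicator {v<..} x * f x) \<partial>lborel) = ennreal (B - A)"
proof -
  have "einterval (ereal v) \<infinity> = {v<..}" by (auto simp: einterval_def)
  moreover have "(\<integral>\<^sup>+x. ennreal (indicator (einterval (ereal v) \<infinity>) x * f x) \<partial>lborel) = ennreal (B - A)"
    by (rule LB) (use assms in \<open>auto simp: ereal_tendsto_simps\<close>)
  ultimately show ?thesis by simp
qed

lemma LB_Ioo:
  fixes f F :: "real \<Rightarrow> real"
  assumes "p < q"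
  assumes F: "\<And>x. p < x \<Longrightarrow> x < q \<Longrightarrow> DERIV F x :> f x"
  assumes f: "\<And>x. p < x \<Longrightarrow> x < q \<Longrightarrow> isCont f x"
  assumes f_nonneg: "\<And>x. p < x \<Longrightarrow> x < q \<Longrightarrow> 0 \<le> f x"
  assumes A: "(F \<longlongrightarrow> A) (at_right p)"
  assumes B: "(F \<longlongrightarrow> B) (at_left q)"
  shows "(\<integral>\<^sup>+x. ennreal (indicator {p<..<q} x * f x) \<partial>lborel) = ennreal (B - A)"
proof -
  have "einterval (ereal p) (ereal q) = {p<..<q}" by (auto simp: einterval_def)
  moreover have "(\<integral>\<^sup>+x. ennreal (indicator (einterval (ereal p) (ereal q)) x * f x) \<partial>lborel) = ennreal (B - A)"
    by (rule LB) (use assms in \<open>auto simp: ereal_tendsto_simps\<close>)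
  ultimately show ?thesis by simp
qed

lemma kernel:
  fixes g :: "real \<Rightarrow> real" and a :: real
  assumes a: "a > 0" and gc: "continuous_on UNIV g" and gn: "\<And>v. 0 \<le> v \<Longrightarrow> 0 \<le> g v"
  shows "(\<integral>\<^sup>+v. ennreal (indicator {0<..} v * (g v * exp (-a* v) / v)) \<partial>lborel) =
         (\<integral>\<^sup>+u. ennreal (indicator {0<..} u * (integral {0..u} g * (exp (-a*u) * (a/u + 1/u^2)))) \<partial>lborel)"
proof -
  define K where "K u = exp (-a*u) * (a/u + 1/u^2)" for u
  have Kn: "u > 0 \<Longrightarrow> K u \<ge> 0" for u using a by (auto simp: K_def)
  have gm[measurable]: "g \<in> borel_measurable borel" by (rule borel_measurable_continuous_onI[OF gc])
  define H where "H u v = ennreal (if 0 < v \<and> v < u then g v * K u else 0)" for u v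
  have step1: "ennreal (indicator {0<..} u * (integral {0..u} g * K u)) = (\<integral>\<^sup>+v. H u v \<partial>lborel)" for u
  proof (cases "u > 0")
    case False
    hence "H u v = 0" for v by (auto simp: H_def)
    thus ?thesis using False by simp
  next
    case True
    have hi: "(g has_integral integral {0..u} g) {0<..<u}"
      using integrable_continuous_interval[OF continuous_on_subset[OF gc], of 0 u]
      by (subst has_integral_Icc_iff_Ioo[symmetric]) (simp add: integrable_integral)
    have "(\<integral>\<^sup>+v. H u v \<partial>lborel) = (\<integral>\<^sup>+v. ennreal (indicator {0<..<u} v * g v) * ennreal (K u) \<partial>lborel)"
      using Kn[OF True] gn by (intro nn_integral_cong) (auto simp: H_def indicator_def ennreal_mult')
    also have "\<dots> = (\<integral>\<^sup>+v. ennreal (indicator {0<..<u} v * g v) \<partial>lborel) * ennreal (K u)"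
      by (rule nn_integral_multc) measurable
    also have "(\<integral>\<^sup>+v. ennreal (indicator {0<..<u} v * g v) \<partial>lborel) = ennreal (integral {0..u} g)"
      using nn_integral_has_integral_lebesgue[OF _ hi] gn by simp
    also have "ennreal (integral {0..u} g) * ennreal (K u) = ennreal (indicator {0<..} u * (integral {0..u} g * K u))"
      using True Kn[OF True] has_integral_nonneg[OF hi] gn by (simp add: ennreal_mult')
    finally show ?thesis ..
  qed
  have step3: "(\<integral>\<^sup>+u. H u v \<partial>lborel) = ennreal (indicator {0<..} v * (g v * exp (-a* v) / v))" for v
  proof (cases "v > 0")
    case False
    hence "H u v = 0" for u by (auto simp: H_def)
    thus ?thesis using False by simp
  next
    case True
    have "(\<integral>\<^sup>+u. H u v \<partial>lborel) = (\<integral>\<^sup>+u. ennreal (g v) * ennreal (indicator {v<..} u * K u) \<partial>lborel)"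
      using Kn True gn by (intro nn_integral_cong) (auto simp: H_def indicator_def ennreal_mult')
    also have "\<dots> = ennreal (g v) * (\<integral>\<^sup>+u. ennreal (indicator {v<..} u * K u) \<partial>lborel)"
      by (rule nn_integral_cmult) (simp add: K_def)
    also have "(\<integral>\<^sup>+u. ennreal (indicator {v<..} u * K u) \<partial>lborel) = ennreal (0 - (- exp (-a* v) / v))"
    proof (rule LB_Ioi[where F = "\<lambda>u. - exp (-a*u) / u"])
      fix x assume x: "v < x"
      with True have x0: "x > 0" by simp
      show "DERIV (\<lambda>u. - exp (-a*u) / u) x :> K x"
        using x0 unfolding K_def
        by (auto intro!: derivative_eq_intros simp: field_simps power2_eq_square)
      show "isCont K x" using x0 unfolding K_def by (auto intro!: continuous_intros)
      show "0 \<le> K x" using Kn x0 by simp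
    next
      show "((\<lambda>u. - exp (-a*u) / u) \<longlongrightarrow> - exp (-a* v) / v) (at_right v)"
        using True by (auto intro!: tendsto_eq_intros)
      show "((\<lambda>u. - exp (-a*u) / u) \<longlongrightarrow> 0) at_top"
        using a by real_asymp
    qed
    also have "ennreal (g v) * ennreal (0 - (- exp (-a* v) / v)) = ennreal (indicator {0<..} v * (g v * exp (-a* v) / v))"
      using True gn[of v] by (simp add: ennreal_mult'[symmetric] times_divide_eq_right)
    finally show ?thesis .
  qed
  have "(\<integral>\<^sup>+u. ennreal (indicator {0<..} u * (integral {0..u} g * K u)) \<partial>lborel) = (\<integral>\<^sup>+u. (\<integral>\<^sup>+v. H u v \<partial>lborel) \<partial>lborel)"
    by (simp add: step1)
  also have "\<dots> = (\<integral>\<^sup>+v. (\<integral>\<^sup>+u. H u v \<partial>lborel) \<partial>lborel)"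
    by (rule lborel_pair.Fubini'[of "\<lambda>v u. H u v"]) (unfold H_def K_def case_prod_unfold, measurable)
  also have "\<dots> = (\<integral>\<^sup>+v. ennreal (indicator {0<..} v * (g v * exp (-a* v) / v)) \<partial>lborel)"
    by (simp add: step3)
  finally show ?thesis unfolding K_def ..
qed

lemma DERIV_exp_lin:
  fixes c x :: real assumes "c \<noteq> 0"
  shows "((\<lambda>v. - exp (- (c * v)) / c) has_real_derivative exp (- (c * x))) (at x)"
proof -
  have "((\<lambda>v. exp (- (c * v))) has_real_derivative exp (- (c * x)) * (- c)) (at x)"
    by (rule derivative_eq_intros refl)+ simp
  from DERIV_cdivide[OF DERIV_minus[OF this], of c] show ?thesis using assms by simp
qed

lemma exp_neg_lin_at_top: "(c::real) > 0 \<Longrightarrow> ((\<lambda>v. exp (- (c * v))) \<longlongrightarrow> 0) at_top"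
  by real_asymp

lemma exp_mult_lin: "exp (- (s * v)) * exp (- (q * v)) = exp (- ((s + q) * v :: real))"
  by (subst exp_add[symmetric]) (simp add: algebra_simps)

lemma frullani2:
  fixes p q :: real
  assumes p: "p > 0" and q: "q > 0"
  shows "(\<integral>\<^sup>+v. ennreal (indicator {0<..} v * (exp (- (p * v)) * (1 - exp (- (q * v)))^2 / v)) \<partial>lborel)
         = ennreal (2 * ln (p+q) - ln p - ln (p + 2 * q))"
proof -
  define H where "H v s = ennreal (if 0 < v \<and> p < s \<and> s < p + q then exp (- (v * s)) * (1 - exp (- (v * q))) else 0)" for v s
  have step1: "ennreal (indicator {0<..} v * (exp (- (p * v)) * (1 - exp (- (q * v)))^2 / v)) = (\<integral>\<^sup>+s. H v s \<partial>lborel)" for v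
  proof (cases "v > 0")
    case False
    hence "H v s = 0" for s by (auto simp: H_def)
    thus ?thesis using False by simp
  next
    case True
    define F where "F s = - exp (- (v * s)) / v - exp (- (v * q)) * (- exp (- (v * s)) / v)" for s
    have "(\<integral>\<^sup>+s. H v s \<partial>lborel) = (\<integral>\<^sup>+s. ennreal (indicator {p<..<p+q} s * (exp (- (v * s)) * (1 - exp (- (v * q))))) \<partial>lborel)"
      using True by (intro nn_integral_cong) (auto simp: H_def indicator_def)
    also have "\<dots> = ennreal (F (p+q) - F p)"
    proof (rule LB_Ioo)
      show "p < p + q" using q by simp
      fix x assume x: "p < x" "x < p + q"
      have "DERIV F x :> exp (- (v * x)) - exp (- (v * q)) * exp (- (v * x))"
        unfolding F_def using True by (intro DERIV_diff DERIV_cmult DERIV_exp_lin) auto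
      thus "DERIV F x :> exp (- (v * x)) * (1 - exp (- (v * q)))" by (simp add: algebra_simps)
      show "isCont (\<lambda>s. exp (- (v * s)) * (1 - exp (- (v * q)))) x" by (auto intro!: continuous_intros)
      show "0 \<le> exp (- (v * x)) * (1 - exp (- (v * q)))" using True q by simp
    next
      show "(F \<longlongrightarrow> F p) (at_right p)" unfolding F_def using True by (auto intro!: tendsto_eq_intros)
      show "(F \<longlongrightarrow> F (p+q)) (at_left (p+q))" unfolding F_def using True by (auto intro!: tendsto_eq_intros)
    qed
    also have "F (p+q) - F p = exp (- (p * v)) * (1 - exp (- (q * v)))^2 / v"
    proof -
      have e1: "exp (- (v * (p + q))) = exp (- (v * p)) * exp (- (v * q))" 
        by (subst exp_add[symmetric]) (simp add: algebra_simps)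
      have "F (p+q) - F p = exp (- (v * p)) * (1 - exp (- (v * q)))^2 / v"
        unfolding F_def e1 using True by (simp add: power2_eq_square divide_simps) (simp add: algebra_simps)
      thus ?thesis by (simp add: mult.commute[of v p] mult.commute[of v q])
    qed
    finally show ?thesis using True by simp
  qed
  have step2: "(\<integral>\<^sup>+v. H v s \<partial>lborel) = ennreal (indicator {p<..<p+q} s * (1/s - 1/(s+q)))" for s
  proof (cases "p < s \<and> s < p + q")
    case False
    hence "H v s = 0" for v by (auto simp: H_def)
    thus ?thesis using False by (auto simp: indicator_def)
  next
    case True
    hence s: "s > 0" using p by simp
    define F where "F v = - exp (- (s * v)) / s - (- exp (- ((s + q) * v)) / (s + q))" for v
    have "(\<integral>\<^sup>+v. H v s \<partial>lborel) = (\<integral>\<^sup>+v. ennreal (indicator {0<..} v * (exp (- (s * v)) - exp (- ((s + q) * v)))) \<partial>lborel)"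
    proof (intro nn_integral_cong)
      fix v :: real
      have "exp (- (v * s)) * (1 - exp (- (v * q))) = exp (- (s * v)) - exp (- (s * v)) * exp (- (q * v))"
        by (simp add: algebra_simps)
      also have "\<dots> = exp (- (s * v)) - exp (- ((s + q) * v))" by (simp only: exp_mult_lin)
      finally show "H v s = ennreal (indicator {0<..} v * (exp (- (s * v)) - exp (- ((s + q) * v))))"
        using True by (simp add: H_def indicator_def)
    qed
    also have "\<dots> = ennreal (0 - F 0)"
    proof (rule LB_Ioi)
      fix x :: real assume x: "0 < x"
      show "DERIV F x :> exp (- (s * x)) - exp (- ((s + q) * x))"
        unfolding F_def using s q by (intro DERIV_diff DERIV_exp_lin) auto
      show "isCont (\<lambda>x. exp (- (s * x)) - exp (- ((s + q) * x))) x" by (auto intro!: continuous_intros)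
      show "0 \<le> exp (- (s * x)) - exp (- ((s + q) * x))" using x q by (simp add: algebra_simps mult_left_mono)
    next
      show "(F \<longlongrightarrow> F 0) (at_right 0)" unfolding F_def using s q by (auto intro!: tendsto_eq_intros)
      have sq: "s + q > 0" using s q by simp
      show "(F \<longlongrightarrow> 0) at_top" unfolding F_def 
        using tendsto_diff[OF tendsto_divide[OF tendsto_minus[OF exp_neg_lin_at_top[OF s]] tendsto_const[of s]]
                              tendsto_divide[OF tendsto_minus[OF exp_neg_lin_at_top[OF sq]] tendsto_const[of "s+q"]]]
        using s sq by simp
    qed
    also have "0 - F 0 = 1/s - 1/(s+q)" by (simp add: F_def)
    finally show ?thesis using True by (simp add: mult.commute)
  qed
  have "(\<integral>\<^sup>+v. ennreal (indicator {0<..} v * (exp (- (p * v)) * (1 - exp (- (q * v)))^2 / v)) \<partial>lborel)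
        = (\<integral>\<^sup>+v. (\<integral>\<^sup>+s. H v s \<partial>lborel) \<partial>lborel)" by (rule nn_integral_cong, rule step1)
  also have "\<dots> = (\<integral>\<^sup>+s. (\<integral>\<^sup>+v. H v s \<partial>lborel) \<partial>lborel)"
    by (rule lborel_pair.Fubini'[of "\<lambda>s v. H v s"]) (unfold H_def case_prod_unfold, measurable)
  also have "\<dots> = (\<integral>\<^sup>+s. ennreal (indicator {p<..<p+q} s * (1/s - 1/(s+q))) \<partial>lborel)"
    by (rule nn_integral_cong, rule step2)
  also have "\<dots> = ennreal ((ln (p+q) - ln (p+q+q)) - (ln p - ln (p+q)))"
  proof (rule LB_Ioo)
    show "p < p + q" using q by simp
    fix x assume x: "p < x" "x < p + q"
    show "DERIV (\<lambda>s. ln s - ln (s+q)) x :> 1/x - 1/(x+q)"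
      using x p q by (auto intro!: derivative_eq_intros simp: field_simps)
    show "isCont (\<lambda>s. 1/s - 1/(s+q)) x" using x p q by (auto intro!: continuous_intros)
    show "0 \<le> 1/x - 1/(x+q)" using x p q by (simp add: field_simps)
  next
    show "((\<lambda>s. ln s - ln (s+q)) \<longlongrightarrow> ln p - ln (p+q)) (at_right p)"
      using p q by (auto intro!: tendsto_eq_intros)
    show "((\<lambda>s. ln s - ln (s+q)) \<longlongrightarrow> ln (p+q) - ln (p+q+q)) (at_left (p+q))"
      using p q by (auto intro!: tendsto_eq_intros simp: algebra_simps)
  qed
  also have "(ln (p+q) - ln (p+q+q)) - (ln p - ln (p+q)) = 2 * ln (p+q) - ln p - ln (p + 2 * q)"
    by (simp add: algebra_simps)
  finally show ?thesis .
qed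

lemma gamma_partial:
  fixes b :: real assumes b: "b > 0"
  shows "(\<Sum>i<n. 2 * ln (b + real i + 1/2) - ln (b + real i) - ln (b + real i + 1))
         = 2 * ln (pochhammer (b + 1/2) n) - 2 * ln (pochhammer b n) + ln b - ln (b + real n)"
proof (induction n)
  case 0 thus ?case by simp
next
  case (Suc n)
  have p1: "pochhammer (b + 1/2) n > 0" "pochhammer b n > 0" using b by (auto intro!: pochhammer_pos)
  have "ln (pochhammer (b + 1/2) (Suc n)) = ln (pochhammer (b + 1/2) n) + ln (b + real n + 1/2)"
    using p1 b by (subst pochhammer_Suc, subst ln_mult_pos) (auto simp: algebra_simps)
  moreover have "ln (pochhammer b (Suc n)) = ln (pochhammer b n) + ln (b + real n)"
    using p1 b by (simp add: pochhammer_Suc ln_mult_pos)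
  ultimately show ?case using Suc.IH by (simp add: algebra_simps)
qed

lemma ln_poch_Gamma_series:
  fixes z :: real assumes z: "z > 0" and n: "n > 0"
  shows "ln (pochhammer z (n+1)) = ln (fact n) + z * ln (real n) - ln (Gamma_series z n)"
proof -
  have pp: "pochhammer z (n+1) > 0" using z by (intro pochhammer_pos)
  have "Gamma_series z n = fact n * exp (z * ln (real n)) / pochhammer z (n+1)"
    by (simp add: Gamma_series_def)
  hence "ln (Gamma_series z n) = ln (fact n) + z * ln (real n) - ln (pochhammer z (n+1))"
    using pp by (simp add: ln_div ln_mult_pos)
  thus ?thesis by simp
qed

lemma gamma_sums:
  fixes b :: real assumes b: "b > 0"
  shows "(\<lambda>i. 2 * ln (b + real i + 1/2) - ln (b + real i) - ln (b + real i + 1)) sums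
           ln (b * Gamma b ^ 2 / Gamma (b + 1/2) ^ 2)"
proof -
  let ?S = "\<lambda>n. (\<Sum>i<n. 2 * ln (b + real i + 1/2) - ln (b + real i) - ln (b + real i + 1))"
  have b2: "b + 1/2 > 0" using b by simp
  have eq: "?S (Suc n) = (ln (real n) - ln (b + real n + 1)) + ln b
              + 2 * ln (Gamma_series b n) - 2 * ln (Gamma_series (b + 1/2) n)" if n: "n > 0" for n
  proof -
    have "?S (Suc n) = 2 * ln (pochhammer (b + 1/2) (n+1)) - 2 * ln (pochhammer b (n+1)) + ln b - ln (b + real (n+1))"
      using gamma_partial[OF b, of "Suc n"] by simp
    also have "\<dots> = (ln (real n) - ln (b + real n + 1)) + ln b
              + 2 * ln (Gamma_series b n) - 2 * ln (Gamma_series (b + 1/2) n)"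
      unfolding ln_poch_Gamma_series[OF b n] ln_poch_Gamma_series[OF b2 n]
      by (simp add: algebra_simps)
    finally show ?thesis .
  qed
  have lim: "(\<lambda>n. (ln (real n) - ln (b + real n + 1)) + ln b
              + 2 * ln (Gamma_series b n) - 2 * ln (Gamma_series (b + 1/2) n))
         \<longlonglongrightarrow> 0 + ln b + 2 * ln (Gamma b) - 2 * ln (Gamma (b + 1/2))"
  proof (intro tendsto_intros)
    show "(\<lambda>n. ln (real n) - ln (b + real n + 1)) \<longlonglongrightarrow> 0" using b by real_asymp
    show "Gamma b \<noteq> 0" using Gamma_real_pos[OF b] by simp
    show "Gamma (b + 1/2) \<noteq> 0" using Gamma_real_pos[OF b2] by simp
  qed
  have "(\<lambda>n. ?S (Suc n)) \<longlonglongrightarrow> 0 + ln b + 2 * ln (Gamma b) - 2 * ln (Gamma (b + 1/2))"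
  proof (rule Lim_transform_eventually[OF lim])
    show "\<forall>\<^sub>F n in sequentially. (ln (real n) - ln (b + real n + 1)) + ln b
              + 2 * ln (Gamma_series b n) - 2 * ln (Gamma_series (b + 1/2) n) = ?S (Suc n)"
      using eventually_gt_at_top[of "0::nat"] by eventually_elim (rule eq[symmetric])
  qed
  hence "?S \<longlonglongrightarrow> 0 + ln b + 2 * ln (Gamma b) - 2 * ln (Gamma (b + 1/2))"
    by (rule LIMSEQ_imp_Suc)
  also have "0 + ln b + 2 * ln (Gamma b) - 2 * ln (Gamma (b + 1/2)) = ln (b * Gamma b ^ 2 / Gamma (b + 1/2) ^ 2)"
  proof -
    have g1: "Gamma b \<noteq> 0" using Gamma_real_pos[OF b] by linarith
    have g2: "Gamma (b + 1/2) \<noteq> 0" using Gamma_real_pos[OF b2] by linarith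
    show ?thesis using b g1 g2 by (simp add: ln_div ln_mult ln_realpow)
  qed
  finally show ?thesis by (simp add: sums_def)
qed

lemma prod_even_odd_split:
  fixes f :: "nat \<Rightarrow> 'a::comm_monoid_mult"
  shows "prod f {1..2*n} = prod (\<lambda>j. f (2*j)) {1..n} * prod (\<lambda>j. f (2*j+1)) {..<n}"
proof (induction n)
  case 0 thus ?case by simp
next
  case (Suc n)
  have "{1..2 * Suc n} = insert (2*n+2) (insert (2*n+1) {1..2*n})" by auto
  hence "prod f {1..2 * Suc n} = f (2*n+2) * (f (2*n+1) * prod f {1..2*n})" by simp
  thus ?case using Suc.IH by (simp add: algebra_simps)
qed

lemma cos_product_formula:
  fixes z :: complex
  assumes nz: "sin (of_real pi * z) \<noteq> 0"
  shows "(\<lambda>n. \<Prod>j<n. 1 - 4 * z^2 / of_nat (2*j+1)^2) \<longlonglongrightarrow> cos (of_real pi * z)"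
proof -
  define Q where "Q w n = (\<Prod>k=1..n. 1 - w^2 / of_nat k^2)" for w :: complex and n
  define C where "C n = (\<Prod>j<n. 1 - 4 * z^2 / of_nat (2*j+1)^2)" for n
  have h1: "(\<lambda>n. of_real pi * (2*z) * Q (2*z) (2*n)) \<longlonglongrightarrow> sin (of_real pi * (2*z))"
  proof -
    have "(\<lambda>n. of_real pi * (2*z) * Q (2*z) n) \<longlonglongrightarrow> sin (of_real pi * (2*z))"
      unfolding Q_def by (rule sin_product_formula_complex)
    from LIMSEQ_subseq_LIMSEQ[OF this, of "\<lambda>n. 2*n"] show ?thesis
      by (simp add: strict_mono_def o_def)
  qed
  have split: "Q (2*z) (2*n) = Q z n * C n" for n
  proof -
    have "Q (2*z) (2*n) = (\<Prod>j=1..n. 1 - (2*z)^2 / of_nat (2*j)^2) * (\<Prod>j<n. 1 - (2*z)^2 / of_nat (2*j+1)^2)"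
      unfolding Q_def by (rule prod_even_odd_split)
    also have "(\<Prod>j=1..n. 1 - (2*z)^2 / of_nat (2*j)^2) = Q z n"
      unfolding Q_def by (intro prod.cong refl) (simp add: power_mult_distrib)
    also have "(\<Prod>j<n. 1 - (2*z)^2 / of_nat (2*j+1)^2) = C n"
      unfolding C_def by (intro prod.cong refl) (simp add: power_mult_distrib)
    finally show ?thesis .
  qed
  have h2: "(\<lambda>n. of_real pi * z * Q z n) \<longlonglongrightarrow> sin (of_real pi * z)"
    unfolding Q_def by (rule sin_product_formula_complex)
  have ev: "eventually (\<lambda>n. of_real pi * z * Q z n \<noteq> 0) sequentially"
    using tendsto_imp_eventually_ne[OF h2 nz] .
  have "(\<lambda>n. (of_real pi * (2*z) * Q (2*z) (2*n)) / (2 * (of_real pi * z * Q z n)))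
          \<longlonglongrightarrow> sin (of_real pi * (2*z)) / (2 * sin (of_real pi * z))"
    using nz by (intro tendsto_intros h1 h2) auto
  also have "sin (of_real pi * (2*z)) / (2 * sin (of_real pi * z)) = cos (of_real pi * z)"
  proof -
    have "of_real pi * (2*z) = 2 * (of_real pi * z)" by simp
    hence "sin (of_real pi * (2*z)) = 2 * sin (of_real pi * z) * cos (of_real pi * z)"
      by (simp only: sin_double)
    thus ?thesis using nz by simp
  qed
  finally have lim: "(\<lambda>n. (of_real pi * (2*z) * Q (2*z) (2*n)) / (2 * (of_real pi * z * Q z n))) \<longlonglongrightarrow> cos (of_real pi * z)" .
  have "(C \<longlongrightarrow> cos (of_real pi * z)) sequentially"
  proof (rule Lim_transform_eventually[OF lim])
    show "\<forall>\<^sub>F n in sequentially. of_real pi * (2*z) * Q (2*z) (2*n) / (2 * (of_real pi * z * Q z n)) = C n"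
      using ev by eventually_elim (simp only: split, simp add: field_simps)
  qed
  thus ?thesis unfolding C_def .
qed

lemma sinh_complex_of_real: "sinh (complex_of_real t) = complex_of_real (sinh t)"
proof -
  have e: "exp (- complex_of_real t) = complex_of_real (exp (-t))"
    by (subst exp_of_real[symmetric]) simp
  have "sinh (complex_of_real t) = (exp (complex_of_real t) - exp (- complex_of_real t)) / 2"
    by (simp add: sinh_def scaleR_conv_of_real)
  also have "\<dots> = complex_of_real ((exp t - exp (-t)) / 2)"
    by (simp only: e exp_of_real of_real_diff of_real_divide) simp
  also have "(exp t - exp (-t)) / 2 = sinh t" by (simp add: sinh_def)
  finally show ?thesis .
qed

lemma cosh_complex_of_real: "cosh (complex_of_real t) = complex_of_real (cosh t)"
proof -
  have e: "exp (- complex_of_real t) = complex_of_real (exp (-t))"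
    by (subst exp_of_real[symmetric]) simp
  have "cosh (complex_of_real t) = (exp (complex_of_real t) + exp (- complex_of_real t)) / 2"
    by (simp add: cosh_def scaleR_conv_of_real)
  also have "\<dots> = complex_of_real ((exp t + exp (-t)) / 2)"
    by (simp only: e exp_of_real of_real_add of_real_divide) simp
  also have "(exp t + exp (-t)) / 2 = cosh t" by (simp add: cosh_def)
  finally show ?thesis .
qed

lemma cosh_product_formula:
  fixes y :: real
  shows "(\<lambda>n. \<Prod>j<n. 1 + 4 * y^2 / real (2*j+1)^2) \<longlonglongrightarrow> cosh (pi * y)"
proof (cases "y = 0")
  case True thus ?thesis by simp
next
  case False
  define z where "z = \<i> * complex_of_real y"
  have arg: "complex_of_real pi * z = \<i> * complex_of_real (pi * y)" by (simp add: z_def)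
  have "sin (complex_of_real pi * z) = \<i> * sinh (complex_of_real (pi * y))"
    unfolding arg by (simp add: sinh_conv_sin)
  also have "\<dots> = \<i> * complex_of_real (sinh (pi * y))" by (simp only: sinh_complex_of_real)
  finally have "sin (complex_of_real pi * z) \<noteq> 0" using False by simp
  from cos_product_formula[OF this]
  have "(\<lambda>n. \<Prod>j<n. 1 - 4 * z^2 / of_nat (2*j+1)^2) \<longlonglongrightarrow> cos (complex_of_real pi * z)" .
  also have "(\<lambda>n. \<Prod>j<n. 1 - 4 * z^2 / of_nat (2*j+1)^2) = (\<lambda>n. complex_of_real (\<Prod>j<n. 1 + 4 * y^2 / real (2*j+1)^2))"
    by (simp add: z_def power_mult_distrib)
  also have "cos (complex_of_real pi * z) = complex_of_real (cosh (pi * y))"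
    unfolding arg by (simp only: cosh_conv_cos[symmetric] cosh_complex_of_real)
  finally show ?thesis by (simp only: tendsto_of_real_iff)
qed

lemma cosh_ln_sums:
  fixes y :: real
  shows "(\<lambda>j. ln (1 + 4 * y^2 / real (2*j+1)^2)) sums ln (cosh (pi * y))"
proof -
  have "(\<lambda>n. ln (\<Prod>j<n. 1 + 4 * y^2 / real (2*j+1)^2)) \<longlonglongrightarrow> ln (cosh (pi * y))"
    by (intro tendsto_ln cosh_product_formula) (simp add: less_imp_neq[symmetric])
  also have "(\<lambda>n. ln (\<Prod>j<n. 1 + 4 * y^2 / real (2*j+1)^2)) = (\<lambda>n. \<Sum>j<n. ln (1 + 4 * y^2 / real (2*j+1)^2))"
  proof
    fix n
    have pos: "1 + 4 * y^2 / real (2*j+1)^2 > 0" for j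
      by (intro add_pos_nonneg) auto
    show "ln (\<Prod>j<n. 1 + 4 * y^2 / real (2*j+1)^2) = (\<Sum>j<n. ln (1 + 4 * y^2 / real (2*j+1)^2))"
      by (rule ln_prod) (use pos in \<open>auto simp: less_imp_neq[symmetric]\<close>)
  qed
  finally show ?thesis by (simp add: sums_def)
qed

lemma NI_series:
  fixes f :: "nat \<Rightarrow> real \<Rightarrow> real"
  assumes meas: "\<And>i. f i \<in> borel_measurable borel"
    and nn: "\<And>i t. t > 0 \<Longrightarrow> 0 \<le> f i t"
    and sm: "\<And>t. t > 0 \<Longrightarrow> (\<lambda>i. f i t) sums S t"
  shows "(\<integral>\<^sup>+t. ennreal (indicator {0<..} t * S t) \<partial>lborel)
         = (\<Sum>i. \<integral>\<^sup>+t. ennreal (indicator {0<..} t * f i t) \<partial>lborel)"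
proof -
  have "(\<integral>\<^sup>+t. ennreal (indicator {0<..} t * S t) \<partial>lborel)
        = (\<integral>\<^sup>+t. (\<Sum>i. ennreal (indicator {0<..} t * f i t)) \<partial>lborel)"
  proof (intro nn_integral_cong)
    fix t :: real
    show "ennreal (indicator {0<..} t * S t) = (\<Sum>i. ennreal (indicator {0<..} t * f i t))"
    proof (cases "t > 0")
      case True
      have "(\<Sum>i. ennreal (f i t)) = ennreal (\<Sum>i. f i t)"
        using True nn sums_summable[OF sm[OF True]] by (intro suminf_ennreal2) auto
      also have "(\<Sum>i. f i t) = S t" using sums_unique[OF sm[OF True]] by simp
      finally show ?thesis using True by simp
    qed simp
  qed
  also have "\<dots> = (\<Sum>i. \<integral>\<^sup>+t. ennreal (indicator {0<..} t * f i t) \<partial>lborel)"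
    by (rule nn_integral_suminf) (intro measurable_compose[OF _ measurable_ennreal] borel_measurable_times borel_measurable_indicator meas, auto simp: meas)
  finally show ?thesis .
qed


lemma ennreal_sums:
  fixes x :: "nat \<Rightarrow> real"
  assumes "\<And>i. 0 \<le> x i" "x sums s"
  shows "(\<Sum>i. ennreal (x i)) = ennreal s"
proof -
  have "(\<Sum>i. ennreal (x i)) = ennreal (\<Sum>i. x i)"
    by (rule suminf_ennreal2) (use assms sums_summable in auto)
  also have "(\<Sum>i. x i) = s" using assms(2) by (rule sums_unique[symmetric])
  finally show ?thesis .
qed

lemma NI_lin_subst:
  fixes h :: "real \<Rightarrow> real" and c :: real
  assumes c: "c > 0" and hm[measurable]: "h \<in> borel_measurable borel"
  shows "(\<integral>\<^sup>+t. ennreal (indicator {0<..} t * h t) \<partial>lborel)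
         = (\<integral>\<^sup>+u. ennreal (indicator {0<..} u * (c * h (c * u))) \<partial>lborel)"
proof -
  have "(\<integral>\<^sup>+t. ennreal (indicator {0<..} t * h t) \<partial>lborel)
        = ennreal \<bar>c\<bar> * (\<integral>\<^sup>+u. ennreal (indicator {0<..} (0 + c * u) * h (0 + c * u)) \<partial>lborel)"
    by (rule nn_integral_real_affine) (use c in auto)
  also have "\<dots> = (\<integral>\<^sup>+u. ennreal c * ennreal (indicator {0<..} u * h (c * u)) \<partial>lborel)"
    using c by (subst nn_integral_cmult) (auto simp: indicator_def zero_less_mult_iff)
  also have "\<dots> = (\<integral>\<^sup>+u. ennreal (indicator {0<..} u * (c * h (c * u))) \<partial>lborel)"
    using c by (intro nn_integral_cong) (auto simp: ennreal_mult'[symmetric] indicator_def)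
  finally show ?thesis .
qed

lemma NI_cmult:
  fixes h :: "real \<Rightarrow> real" and k :: real
  assumes k: "k \<ge> 0" and hm[measurable]: "h \<in> borel_measurable borel"
  shows "(\<integral>\<^sup>+t. ennreal (indicator {0<..} t * (k * h t)) \<partial>lborel)
         = ennreal k * (\<integral>\<^sup>+t. ennreal (indicator {0<..} t * h t) \<partial>lborel)"
proof -
  have "(\<integral>\<^sup>+t. ennreal (indicator {0<..} t * (k * h t)) \<partial>lborel)
        = (\<integral>\<^sup>+t. ennreal k * ennreal (indicator {0<..} t * h t) \<partial>lborel)"
    using k by (intro nn_integral_cong) (auto simp: ennreal_mult'[symmetric] indicator_def)
  also have "\<dots> = ennreal k * (\<integral>\<^sup>+t. ennreal (indicator {0<..} t * h t) \<partial>lborel)"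
    by (rule nn_integral_cmult) measurable
  finally show ?thesis .
qed

lemma integral_from_deriv:
  fixes f Fn :: "real \<Rightarrow> real"
  assumes "u \<ge> 0" "\<And>x. 0 \<le> x \<Longrightarrow> (Fn has_real_derivative f x) (at x)"
  shows "integral {0..u} f = Fn u - Fn 0"
proof -
  have "(f has_integral (Fn u - Fn 0)) {0..u}"
  proof (rule fundamental_theorem_of_calculus[OF assms(1)])
    fix x assume "x \<in> {0..u}"
    hence "(Fn has_real_derivative f x) (at x)" using assms(2) by auto
    thus "(Fn has_vector_derivative f x) (at x within {0..u})"
      by (simp add: has_real_derivative_iff_has_vector_derivative has_vector_derivative_at_within)
  qed
  thus ?thesis by (rule integral_unique)
qed

lemma aux_tanh:
  fixes P E w v :: real
  assumes "w \<noteq> 1" "w \<noteq> -1"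
  shows "P * E * (1 - w)^2 / v * (1 / (1 - w^2)) = P * ((1 - w) / (1 + w)) * E / v"
proof -
  have f: "1 - w^2 = (1-w)*(1+w)" by (simp add: algebra_simps power2_eq_square)
  have n1: "1 - w \<noteq> 0" "1 + w \<noteq> 0" using assms by auto
  have "(1 - w)^2 / (1 - w^2) = ((1 - w) * (1 - w)) / ((1 - w) * (1 + w))"
    by (subst f) (simp only: power2_eq_square)
  also have "\<dots> = (1 - w) / (1 + w)" using n1 by simp
  finally have "(1 - w)^2 / (1 - w^2) = (1 - w) / (1 + w)" .
  have "P * E * (1 - w)^2 / v * (1 / (1 - w^2)) = P * E / v * ((1 - w)^2 / (1 - w^2))"
    by (simp only: divide_inverse mult_ac mult_1_left)
  also note \<open>(1 - w)^2 / (1 - w^2) = (1 - w) / (1 + w)\<close>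
  also have "P * E / v * ((1 - w) / (1 + w)) = P * ((1 - w) / (1 + w)) * E / v"
    by (simp only: divide_inverse mult_ac)
  finally show ?thesis .
qed

lemma artanh_nonneg: "0 \<le> y \<Longrightarrow> y < 1 \<Longrightarrow> 0 \<le> artanh (y::real)"
  by (simp add: artanh_def)

lemma d_nonneg: "x > 0 \<Longrightarrow> 0 \<le> 2 * ln (x + 1/2) - ln x - ln (x + 1 :: real)"
proof -
  assume x: "x > 0"
  have "ln (x * (x+1)) \<le> ln ((x + 1/2)^2)"
    using x by (intro ln_mono) (auto simp: power2_eq_square algebra_simps intro: add_pos_pos)
  thus ?thesis using x by (simp add: ln_mult_pos ln_realpow)
qed

theorem mainTheorem7:
  fixes a m :: real
  assumes "a > 0" and "m > 0"
  shows "((\<lambda>x. artanh (x powr m) / (x * (a\<^sup>2 + (ln x)\<^sup>2))) has_integral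
           (pi / (4 * a)) * ln ((a * m * (Gamma (a * m / (2 * pi)))\<^sup>2) /
                                 (2 * pi * (Gamma ((a * m + pi) / (2 * pi)))\<^sup>2)))
         {0<..<1}"
proof -
  note a = assms(1) and m = assms(2)
  define F where "F x = artanh (x powr m) / (x * (a\<^sup>2 + (ln x)\<^sup>2))" for x :: real
  define NI where "NI h = (\<integral>\<^sup>+t. ennreal (indicator {0<..} t * h t) \<partial>lborel)" for h :: "real \<Rightarrow> real"
  define c where "c = pi / (2 * m)"
  define b where "b = a / (4 * c)"
  define M where "M n = m * real (2*n+1)" for n :: nat
  define K where "K u = exp (- a * u) * (a/u + 1/u^2)" for u :: real
  define gn where "gn n v = (m / a) * v / ((M n)^2 + v^2)" for n v
  define Gn where "Gn n u = (m / (2*a)) * ln (1 + u^2 / (M n)^2)" for n u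
  define g where "g v = (pi / (4*a)) * tanh (c * v)" for v
  define G where "G u = (m / (2*a)) * ln (cosh (c * u))" for u
  define d where "d i = 2 * ln (b + real i + 1/2) - ln (b + real i) - ln (b + real i + 1)" for i :: nat
  define R where "R = (pi / (4 * a)) * ln (b * Gamma b ^ 2 / Gamma (b + 1/2) ^ 2)"
  have c: "c > 0" using m by (simp add: c_def)
  have b: "b > 0" using a c by (simp add: b_def)
  have Mpos: "M n > 0" for n using m by (simp add: M_def)
  have Fm[measurable]: "F \<in> borel_measurable borel" unfolding F_def artanh_def by measurable
  have Fnn: "0 \<le> F x" if x: "0 < x" "x < 1" for x
  proof -
    have "x powr m < 1 powr m" using x m by (intro powr_less_mono2) auto
    hence "x powr m < 1" by simp
    hence "0 \<le> artanh (x powr m)" by (intro artanh_nonneg) auto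
    moreover have "0 < x * (a\<^sup>2 + (ln x)\<^sup>2)" using x a by (intro mult_pos_pos add_pos_nonneg) auto
    ultimately show ?thesis unfolding F_def by simp
  qed
  have step1: "(\<integral>\<^sup>+x. ennreal (indicator {0<..<1} x * F x) \<partial>lborel) = NI (\<lambda>t. artanh (exp (- (m * t))) / (a\<^sup>2 + t\<^sup>2))"
  proof -
    have "(\<integral>\<^sup>+x. ennreal (indicator {0<..<1} x * F x) \<partial>lborel)
          = (\<integral>\<^sup>+x. ennreal (indicator {0<..<1} x * max 0 (F x)) \<partial>lborel)"
      by (intro nn_integral_cong) (auto simp: indicator_def max_def dest: Fnn)
    also have "\<dots> = (\<integral>\<^sup>+t. ennreal (indicator {0<..} t * (max 0 (F (exp (-t))) * exp (-t))) \<partial>lborel)"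
      by (rule exp_subst_nonneg) auto
    also have "\<dots> = NI (\<lambda>t. artanh (exp (- (m * t))) / (a\<^sup>2 + t\<^sup>2))"
      unfolding NI_def
    proof (intro nn_integral_cong)
      fix t :: real
      show "ennreal (indicator {0<..} t * (max 0 (F (exp (-t))) * exp (-t))) =
            ennreal (indicator {0<..} t * (artanh (exp (- (m * t))) / (a\<^sup>2 + t\<^sup>2)))"
      proof (cases "t > 0")
        case True
        have e: "exp (-t) < 1" using True by simp
        have "max 0 (F (exp (-t))) = F (exp (-t))" using Fnn[of "exp (-t)"] e by simp
        moreover have "exp (-t) powr m = exp (- (m * t))" by (simp add: powr_def)
        moreover have "F (exp (-t)) * exp (-t) = artanh (exp (-t) powr m) / (a\<^sup>2 + t\<^sup>2)"
        proof -
          have "a\<^sup>2 + t\<^sup>2 > 0" using a by (intro add_pos_nonneg) auto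
          have aux: "e \<noteq> 0 \<Longrightarrow> y / (e * D) * e = y / (D::real)" for e y D
            by (cases "D = 0") (auto simp: field_simps)
          show ?thesis unfolding F_def by (subst aux) auto
        qed
        ultimately show ?thesis using True by simp
      qed simp
    qed
    finally show ?thesis .
  qed
  have step2: "NI (\<lambda>t. artanh (exp (- (m * t))) / (a\<^sup>2 + t\<^sup>2)) = (\<Sum>n. NI (\<lambda>t. exp (- (M n * t)) / (real (2*n+1) * (a\<^sup>2 + t\<^sup>2))))"
    unfolding NI_def
  proof (rule NI_series)
    show "(\<lambda>t. exp (- (M n * t)) / (real (2*n+1) * (a\<^sup>2 + t\<^sup>2))) \<in> borel_measurable borel" for n
      by measurable
    show "0 \<le> exp (- (M n * t)) / (real (2*n+1) * (a\<^sup>2 + t\<^sup>2))" for n t by simp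
    fix t :: real assume t: "t > 0"
    define y where "y = exp (- (m * t))"
    have y: "0 \<le> y" "y < 1" using t m by (auto simp: y_def)
    from sums_divide[OF artanh_sums[OF y], of "a\<^sup>2 + t\<^sup>2"]
    have "(\<lambda>n. y ^ (2*n+1) / real (2*n+1) / (a\<^sup>2 + t\<^sup>2)) sums (artanh y / (a\<^sup>2 + t\<^sup>2))" .
    also have "(\<lambda>n. y ^ (2*n+1) / real (2*n+1) / (a\<^sup>2 + t\<^sup>2)) = (\<lambda>n. exp (- (M n * t)) / (real (2*n+1) * (a\<^sup>2 + t\<^sup>2)))"
    proof
      fix n
      have "y ^ (2*n+1) = exp (real (2*n+1) * (- (m * t)))" unfolding y_def by (rule exp_of_nat_mult[symmetric])
      also have "real (2*n+1) * (- (m * t)) = - (M n * t)" by (simp add: M_def algebra_simps)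
      finally show "y ^ (2*n+1) / real (2*n+1) / (a\<^sup>2 + t\<^sup>2) = exp (- (M n * t)) / (real (2*n+1) * (a\<^sup>2 + t\<^sup>2))"
        by simp
    qed
    finally show "(\<lambda>n. exp (- (M n * t)) / (real (2*n+1) * (a\<^sup>2 + t\<^sup>2))) sums (artanh (exp (- (m * t))) / (a\<^sup>2 + t\<^sup>2))"
      unfolding y_def .
  qed
  have step3: "NI (\<lambda>t. exp (- (M n * t)) / (real (2*n+1) * (a\<^sup>2 + t\<^sup>2))) = NI (\<lambda>v. gn n v * exp (- a * v) / v)" for n
  proof -
    have cp: "a / M n > 0" using a Mpos[of n] by simp
    have "NI (\<lambda>t. exp (- (M n * t)) / (real (2*n+1) * (a\<^sup>2 + t\<^sup>2)))
          = NI (\<lambda>u. a / M n * (exp (- (M n * (a / M n * u))) / (real (2*n+1) * (a\<^sup>2 + (a / M n * u)\<^sup>2))))"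
      unfolding NI_def by (rule NI_lin_subst[OF cp]) measurable
    also have "\<dots> = NI (\<lambda>v. gn n v * exp (- a * v) / v)"
      unfolding NI_def
    proof (intro nn_integral_cong)
      fix u :: real
      show "ennreal (indicator {0<..} u * (a / M n * (exp (- (M n * (a / M n * u))) / (real (2*n+1) * (a\<^sup>2 + (a / M n * u)\<^sup>2)))))
            = ennreal (indicator {0<..} u * (gn n u * exp (- a * u) / u))"
      proof (cases "u > 0")
        case True
        define k where "k = real (2*n+1)"
        have k: "k > 0" by (simp add: k_def)
        have Mk: "M n = m * k" by (simp add: M_def k_def)
        have e: "M n * (a / M n * u) = a * u" using Mpos[of n] by simp
        have "a / M n * (exp (- (M n * (a / M n * u))) / (real (2*n+1) * (a\<^sup>2 + (a / M n * u)\<^sup>2)))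
              = gn n u * exp (- a * u) / u"
        proof -
          have p1: "a * (a * (k * (u * u))) + a * (a * (k * (k * (k * (m * m))))) \<noteq> 0"
            using True k m a by (intro less_imp_neq[symmetric] add_pos_pos mult_pos_pos) auto
          have p2: "a * (u * (u * u)) + a * (k * (k * (m * (m * u)))) \<noteq> 0"
            using True k m a by (intro less_imp_neq[symmetric] add_pos_pos mult_pos_pos) auto
          show ?thesis unfolding e gn_def k_def[symmetric] Mk using True k m a p1 p2
            by (simp add: field_simps power2_eq_square)
        qed
        thus ?thesis by simp
      qed simp
    qed
    finally show ?thesis .
  qed
  have step4: "NI (\<lambda>v. gn n v * exp (- a * v) / v) = NI (\<lambda>u. Gn n u * K u)" for n
  proof -
    have M2: "(M n)^2 > 0" using Mpos[of n] by simp
    have "NI (\<lambda>v. gn n v * exp (- a * v) / v) = NI (\<lambda>u. integral {0..u} (gn n) * (exp (-a*u) * (a/u + 1/u^2)))"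
      unfolding NI_def
    proof (rule kernel[OF a])
      show "continuous_on UNIV (gn n)" unfolding gn_def
        using M2 by (intro continuous_intros) (auto simp: add_pos_nonneg less_imp_neq[symmetric])
      show "0 \<le> gn n v" if "0 \<le> v" for v unfolding gn_def using that m a M2
        by (intro divide_nonneg_pos mult_nonneg_nonneg) (auto intro: add_pos_nonneg)
    qed
    also have "\<dots> = NI (\<lambda>u. Gn n u * K u)"
      unfolding NI_def
    proof (intro nn_integral_cong)
      fix u :: real
      show "ennreal (indicator {0<..} u * (integral {0..u} (gn n) * (exp (-a*u) * (a/u + 1/u^2))))
            = ennreal (indicator {0<..} u * (Gn n u * K u))"
      proof (cases "u > 0")
        case True
        have "integral {0..u} (gn n) = Gn n u - Gn n 0"
        proof (rule integral_from_deriv)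
          show "0 \<le> u" using True by simp
          fix x :: real assume "0 \<le> x"
          have Gn_alt: "Gn n = (\<lambda>x. (m/(2*a)) * (ln ((M n)^2 + x^2) - ln ((M n)^2)))"
          proof
            fix x
            have "1 + x^2 / (M n)^2 = ((M n)^2 + x^2) / (M n)^2" using M2 by (simp add: field_simps)
            moreover have "(M n)^2 + x^2 > 0" using M2 by (intro add_pos_nonneg) auto
            ultimately show "Gn n x = (m/(2*a)) * (ln ((M n)^2 + x^2) - ln ((M n)^2))"
              unfolding Gn_def using M2 by (simp add: ln_div)
          qed
          have Q: "(M n)^2 + x^2 > 0" using M2 by (intro add_pos_nonneg) auto
          have "((\<lambda>x. ln ((M n)^2 + x^2)) has_real_derivative (2 * x) / ((M n)^2 + x^2)) (at x)"
            using Q by (auto intro!: derivative_eq_intros simp: field_simps)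
          hence "((\<lambda>x. (m/(2*a)) * (ln ((M n)^2 + x^2) - ln ((M n)^2))) has_real_derivative
                  (m/(2*a)) * ((2 * x) / ((M n)^2 + x^2) - 0)) (at x)"
            by (intro DERIV_cmult DERIV_diff DERIV_const)
          moreover have "(m/(2*a)) * ((2 * x) / ((M n)^2 + x^2) - 0) = gn n x"
            unfolding gn_def using a by (simp add: field_simps)
          ultimately show "(Gn n has_real_derivative gn n x) (at x)" unfolding Gn_alt by simp
        qed
        also have "Gn n 0 = 0" by (simp add: Gn_def)
        finally show ?thesis by (simp add: K_def)
      qed simp
    qed
    finally show ?thesis .
  qed
  have step5: "(\<Sum>n. NI (\<lambda>u. Gn n u * K u)) = NI (\<lambda>u. G u * K u)"
    unfolding NI_def
  proof (rule NI_series[symmetric])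
    show "(\<lambda>u. Gn n u * K u) \<in> borel_measurable borel" for n unfolding Gn_def K_def by measurable
    show "0 \<le> Gn n u * K u" if "u > 0" for n u
    proof -
      have "0 \<le> Gn n u" unfolding Gn_def using m a by (intro mult_nonneg_nonneg) auto
      moreover have "0 \<le> K u" unfolding K_def using that a by simp
      ultimately show ?thesis by simp
    qed
    fix u :: real assume u: "u > 0"
    have "(\<lambda>j. ln (1 + 4 * (u / (2*m))^2 / real (2*j+1)^2)) sums ln (cosh (pi * (u / (2*m))))"
      by (rule cosh_ln_sums)
    also have "(\<lambda>j. ln (1 + 4 * (u / (2*m))^2 / real (2*j+1)^2)) = (\<lambda>j. ln (1 + u^2 / (M j)^2))"
      unfolding M_def using m by (intro ext) (simp add: field_simps power2_eq_square)
    also have "pi * (u / (2*m)) = c * u" unfolding c_def by simp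
    finally have "(\<lambda>j. ln (1 + u^2 / (M j)^2)) sums ln (cosh (c * u))" .
    from sums_mult2[OF sums_mult[OF this, of "m / (2*a)"], of "K u"]
    show "(\<lambda>n. Gn n u * K u) sums (G u * K u)" unfolding Gn_def G_def .
  qed
  have step6: "NI (\<lambda>u. G u * K u) = NI (\<lambda>v. g v * exp (- a * v) / v)"
  proof -
    have "NI (\<lambda>v. g v * exp (- a * v) / v) = NI (\<lambda>u. integral {0..u} g * (exp (-a*u) * (a/u + 1/u^2)))"
      unfolding NI_def
    proof (rule kernel[OF a])
      show "continuous_on UNIV g" unfolding g_def
        by (intro continuous_intros) auto
      show "0 \<le> g v" if "0 \<le> v" for v unfolding g_def using that a c
        by (intro mult_nonneg_nonneg) auto
    qed
    also have "\<dots> = NI (\<lambda>u. G u * K u)"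
      unfolding NI_def
    proof (intro nn_integral_cong)
      fix u :: real
      show "ennreal (indicator {0<..} u * (integral {0..u} g * (exp (-a*u) * (a/u + 1/u^2))))
            = ennreal (indicator {0<..} u * (G u * K u))"
      proof (cases "u > 0")
        case True
        have "integral {0..u} g = G u - G 0"
        proof (rule integral_from_deriv)
          show "0 \<le> u" using True by simp
          fix x :: real assume "0 \<le> x"
          have "((\<lambda>x. ln (cosh (c * x))) has_real_derivative c * tanh (c * x)) (at x)"
            by (auto intro!: derivative_eq_intros simp: tanh_def field_simps)
          hence "((\<lambda>x. (m / (2*a)) * ln (cosh (c * x))) has_real_derivative (m / (2*a)) * (c * tanh (c * x))) (at x)"
            by (rule DERIV_cmult)
          moreover have "(m / (2*a)) * (c * tanh (c * x)) = g x"
            unfolding g_def c_def using m a by (simp add: field_simps)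
          ultimately show "(G has_real_derivative g x) (at x)" unfolding G_def by simp
        qed
        also have "G 0 = 0" by (simp add: G_def)
        finally show ?thesis by (simp add: K_def)
      qed simp
    qed
    finally show ?thesis ..
  qed
  have step7: "NI (\<lambda>v. g v * exp (- a * v) / v) = (\<Sum>i. ennreal (pi / (4*a) * d i))"
  proof -
    define p where "p i = a + 4 * real i * c" for i :: nat
    define q where "q = 2 * c"
    have p: "p i > 0" for i unfolding p_def using a c by (intro add_pos_nonneg) auto
    have q: "q > 0" unfolding q_def using c by simp
    define f where "f i v = (pi / (4*a)) * (exp (- (p i * v)) * (1 - exp (- (q * v)))^2 / v)" for i v
    have "NI (\<lambda>v. g v * exp (- a * v) / v) = (\<Sum>i. NI (f i))"
      unfolding NI_def
    proof (rule NI_series)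
      show "f i \<in> borel_measurable borel" for i unfolding f_def by measurable
      show "0 \<le> f i v" if "v > 0" for i v unfolding f_def using that a by simp
      fix v :: real assume v: "v > 0"
      define w where "w = exp (- (q * v))"
      have w: "0 < w" "w < 1" using v q by (auto simp: w_def)
      have w2: "norm (w^2) < 1" using w by (simp add: power_less_one_iff abs_square_less_1)
      define C where "C = (pi / (4*a)) * exp (- (a * v)) * (1 - w)^2 / v"
      from sums_mult[OF geometric_sums[OF w2], of C]
      have "(\<lambda>i. C * (w^2)^i) sums (C * (1 / (1 - w^2)))" .
      also have "(\<lambda>i. C * (w^2)^i) = (\<lambda>i. f i v)"
      proof
        fix i
        have "(w^2)^i = w ^ (2*i)" by (simp add: power_mult)
        also have "\<dots> = exp (real (2*i) * (- (q * v)))" unfolding w_def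
          by (rule exp_of_nat_mult[symmetric])
        finally have "(w^2)^i = exp (real (2*i) * (- (q * v)))" .
        hence "exp (- (a * v)) * (w^2)^i = exp (- (p i * v))"
          by (simp add: p_def q_def exp_add[symmetric] algebra_simps)
        thus "C * (w^2)^i = f i v" unfolding C_def f_def w_def[symmetric]
          by (simp add: field_simps)
      qed
      also have "C * (1 / (1 - w^2)) = g v * exp (- a * v) / v"
      proof -
        have t: "tanh (c * v) = (1 - w) / (1 + w)"
          unfolding tanh_real_altdef w_def q_def by (simp add: algebra_simps)
        show ?thesis unfolding C_def g_def t using w aux_tanh[of w "pi / (4*a)" "exp (- (a * v))" v]
          by simp
      qed
      finally show "(\<lambda>i. f i v) sums (g v * exp (- a * v) / v)" .
    qed
    also have "\<dots> = (\<Sum>i. ennreal (pi / (4*a) * d i))"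
    proof (intro suminf_cong)
      fix i
      have "NI (f i) = ennreal (pi / (4*a)) * NI (\<lambda>v. exp (- (p i * v)) * (1 - exp (- (q * v)))^2 / v)"
        unfolding NI_def f_def using a by (intro NI_cmult) (auto, measurable)
      also have "NI (\<lambda>v. exp (- (p i * v)) * (1 - exp (- (q * v)))^2 / v) = ennreal (2 * ln (p i + q) - ln (p i) - ln (p i + 2 * q))"
        unfolding NI_def by (rule frullani2[OF p q])
      also have "2 * ln (p i + q) - ln (p i) - ln (p i + 2 * q) = d i"
      proof -
        have bc: "a = 4 * c * b" unfolding b_def using c by simp
        have e1: "p i = (4 * c) * (b + real i)" unfolding p_def bc by (simp add: algebra_simps)
        have e2: "p i + q = (4 * c) * (b + real i + 1/2)" unfolding p_def q_def bc by (simp add: algebra_simps)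
        have e3: "p i + 2 * q = (4 * c) * (b + real i + 1)" unfolding p_def q_def bc by (simp add: algebra_simps)
        have pos: "4 * c > 0" "b + real i > 0" "b + real i + 1/2 > 0" "b + real i + 1 > 0" using c b by auto
        show ?thesis unfolding d_def
          by (subst e2, subst e3, subst e1) (use pos in \<open>simp add: ln_mult_pos\<close>)
      qed
      also have "ennreal (pi / (4*a)) * ennreal (d i) = ennreal (pi / (4*a) * d i)"
        using a by (simp add: ennreal_mult'[symmetric])
      finally show "NI (f i) = ennreal (pi / (4*a) * d i)" .
    qed
    finally show ?thesis .
  qed
  have dnn: "0 \<le> d i" for i unfolding d_def using d_nonneg[of "b + real i"] b by simp
  have dsums: "(\<lambda>i. pi / (4*a) * d i) sums R"
    unfolding R_def d_def by (intro sums_mult gamma_sums b)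
  have step8: "(\<Sum>i. ennreal (pi / (4*a) * d i)) = ennreal R"
    by (rule ennreal_sums[OF _ dsums]) (use dnn a in simp)
  have Rnn: "R \<ge> 0"
    by (rule sums_le[OF _ sums_zero dsums]) (use dnn a in simp)
  have step9: "R = (pi / (4 * a)) * ln ((a * m * (Gamma (a * m / (2 * pi)))\<^sup>2) /
                                 (2 * pi * (Gamma ((a * m + pi) / (2 * pi)))\<^sup>2))"
  proof -
    have b': "b = a * m / (2 * pi)" unfolding b_def c_def using m by (simp add: field_simps)
    have b2: "(a * m + pi) / (2 * pi) = b + 1/2" unfolding b' by (simp add: field_simps)
    have "a * m * (Gamma b)\<^sup>2 / (2 * pi * (Gamma (b + 1/2))\<^sup>2) = b * Gamma b ^ 2 / Gamma (b + 1/2) ^ 2"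
      unfolding b' by (simp add: field_simps)
    thus ?thesis unfolding R_def b2 b'[symmetric] by simp
  qed
  have total: "(\<integral>\<^sup>+x. ennreal (indicator {0<..<1} x * F x) \<partial>lborel) = ennreal R"
    using step1 step2 step3 step4 step5 step6 step7 step8 by simp
  have "((\<lambda>x. indicator {0<..<1} x * F x) has_integral R) UNIV"
  proof (rule nn_integral_has_integral)
    show "(\<lambda>x. indicator {0<..<1} x * F x) \<in> borel_measurable borel" by measurable
    show "0 \<le> indicator {0<..<1} x * F x" for x using Fnn[of x] by (auto simp: indicator_def)
  qed (use total Rnn in simp_all)
  moreover have "(\<lambda>x. indicator {0<..<1} x * F x) = (\<lambda>x. if x \<in> {0<..<1} then F x else 0)"
    by (auto simp: indicator_def)
  ultimately have "(F has_integral R) {0<..<1}"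
    by (simp only: has_integral_restrict_UNIV)
  thus ?thesis unfolding step9 F_def .
qed

end
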